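(* Let $G$ be a connected graph and $P$ an isometric path in $G$. If $P$ is bypath-free in $G$, then $P$ is $1$-leisurely-guardable.
   Context: A path $P$ in $G$ is isometric if $d_P(x,y)=d_G(x,y)$ for all $x,y\in V(P)$. For a subgraph $H$ of $G$ and an isometric path $P=v_1\cdots v_k$ in $H$, a bypath of $P$ in $H$ is a path $B=b_1\cdots b_t$ with $t\ge3$, $V(B)\subseteq V(H)$, $b_1=v_i$, $b_t=v_j$ for some $i<j$, $V(B)\cap V(P)=\{v_i,v_j\}$, and such that $v_1\cdots v_ib_2\cdots b_{t-1}v_j\cdots v_k$ is also an isometric path in $H$; $P$ is bypath-free in $H$ if $H$ contains no bypath of $P$. Cops and robber game on $G$: cops choose starting vertices, then the robber; then they alternate turns, each moving pieces to adjacent vertices or staying; capture occurs when a cop occupies the robber's vertex. An isometric (induced) subgraph $H$ is $k$-guardable if $k$ cops have a strategy such that after finitely many moves they are on vertices of $H$, stay in $H$ thereafter, and whenever the robber enters $H$ he is captured by one of them in the next turn. $H$ is $k$-leisurely-guardable if it is $k$-guardable via a $k$-guarding strategy with $k$ cops for which there is an integer $t$ such that in every sequence of $t$ consecutive moves there is a move in which at least one of these cops stays still. *)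

theory Defs
  imports Main
begin

definition graph :: "'a set \<Rightarrow> ('a \<Rightarrow> 'a \<Rightarrow> bool) \<Rightarrow> bool" where
  "graph V adj \<longleftrightarrow> finite V \<and> (\<forall>x y. adj x y \<longrightarrow> x \<in> V \<and> y \<in> V)
     \<and> (\<forall>x y. adj x y \<longrightarrow> adj y x) \<and> (\<forall>x. \<not> adj x x)"

definition is_walk :: "'a set \<Rightarrow> ('a \<Rightarrow> 'a \<Rightarrow> bool) \<Rightarrow> 'a list \<Rightarrow> bool" where
  "is_walk V adj xs \<longleftrightarrow> xs \<noteq> [] \<and> set xs \<subseteq> V
     \<and> (\<forall>i. Suc i < length xs \<longrightarrow> adj (xs ! i) (xs ! Suc i))"

definition is_path :: "'a set \<Rightarrow> ('a \<Rightarrow> 'a \<Rightarrow> bool) \<Rightarrow> 'a list \<Rightarrow> bool" where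
  "is_path V adj xs \<longleftrightarrow> is_walk V adj xs \<and> distinct xs"

definition connected_graph :: "'a set \<Rightarrow> ('a \<Rightarrow> 'a \<Rightarrow> bool) \<Rightarrow> bool" where
  "connected_graph V adj \<longleftrightarrow> graph V adj \<and>
     (\<forall>x\<in>V. \<forall>y\<in>V. \<exists>xs. is_walk V adj xs \<and> hd xs = x \<and> last xs = y)"

definition gdist :: "'a set \<Rightarrow> ('a \<Rightarrow> 'a \<Rightarrow> bool) \<Rightarrow> 'a \<Rightarrow> 'a \<Rightarrow> nat" where
  "gdist V adj x y = (LEAST n. \<exists>xs. is_walk V adj xs \<and> hd xs = x \<and> last xs = y
                                     \<and> length xs = Suc n)"

text \<open>The path P viewed as a subgraph (its edges are the consecutive pairs).\<close>

definition path_adj :: "'a list \<Rightarrow> 'a \<Rightarrow> 'a \<Rightarrow> bool" where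
  "path_adj P x y \<longleftrightarrow> (\<exists>i. Suc i < length P \<and>
      ((x = P ! i \<and> y = P ! Suc i) \<or> (y = P ! i \<and> x = P ! Suc i)))"

definition isometric_path :: "'a set \<Rightarrow> ('a \<Rightarrow> 'a \<Rightarrow> bool) \<Rightarrow> 'a list \<Rightarrow> bool" where
  "isometric_path V adj P \<longleftrightarrow> is_path V adj P \<and>
     (\<forall>x\<in>set P. \<forall>y\<in>set P. gdist (set P) (path_adj P) x y = gdist V adj x y)"

text \<open>Bypaths (0-indexed: P ! i = v_{i+1}).  B = b_1 ... b_t, t >= 3, from P!i to P!j,
 i < j, meeting P only in its endpoints, such that
 v_1..v_i b_2..b_{t-1} v_j..v_k is again an isometric path of the graph.\<close>

definition bypath :: "'a set \<Rightarrow> ('a \<Rightarrow> 'a \<Rightarrow> bool) \<Rightarrow> 'a list \<Rightarrow> 'a list \<Rightarrow> bool" where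
  "bypath V adj P B \<longleftrightarrow> is_path V adj B \<and> length B \<ge> 3 \<and> set B \<subseteq> V \<and>
     (\<exists>i j. i < j \<and> j < length P \<and> hd B = P ! i \<and> last B = P ! j \<and>
        set B \<inter> set P = {P ! i, P ! j} \<and>
        isometric_path V adj (take (Suc i) P @ butlast (tl B) @ drop j P))"

definition bypath_free :: "'a set \<Rightarrow> ('a \<Rightarrow> 'a \<Rightarrow> bool) \<Rightarrow> 'a list \<Rightarrow> bool" where
  "bypath_free V adj P \<longleftrightarrow> \<not> (\<exists>B. bypath V adj P B)"

text \<open>A robber play is an infinite sequence of positions r 0, r 1, ...; r 0 is the
starting vertex, r n (n >= 1) the position after his n-th move.\<close>

definition robber_walk :: "'a set \<Rightarrow> ('a \<Rightarrow> 'a \<Rightarrow> bool) \<Rightarrow> (nat \<Rightarrow> 'a) \<Rightarrow> bool" where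
  "robber_walk V adj r \<longleftrightarrow> (\<forall>n. r n \<in> V) \<and> (\<forall>n. r (Suc n) = r n \<or> adj (r n) (r (Suc n)))"

text \<open>A (deterministic) strategy of a single cop maps the robber positions seen so far
to the cop's next position: the starting vertex is sigma [], and the position after
the n-th cop move (which is made after seeing r 0 .. r (n-1)) is sigma [r 0, ..., r (n-1)].
Order of events: c 0, r 0, c 1, r 1, c 2, r 2, ...\<close>

definition cpos :: "('a list \<Rightarrow> 'a) \<Rightarrow> (nat \<Rightarrow> 'a) \<Rightarrow> nat \<Rightarrow> 'a" where
  "cpos \<sigma> r n = \<sigma> (map r [0..<n])"

definition legal_cop_strategy :: "'a set \<Rightarrow> ('a \<Rightarrow> 'a \<Rightarrow> bool) \<Rightarrow> ('a list \<Rightarrow> 'a) \<Rightarrow> bool" where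
  "legal_cop_strategy V adj \<sigma> \<longleftrightarrow> (\<forall>r. robber_walk V adj r \<longrightarrow>
      \<sigma> [] \<in> V \<and> (\<forall>n. cpos \<sigma> r (Suc n) = cpos \<sigma> r n \<or> adj (cpos \<sigma> r n) (cpos \<sigma> r (Suc n))))"

text \<open>The game is still running when the cop is about to make move n
(no capture among the events c 0, r 0, ..., c (n-1), r (n-1)).\<close>

definition alive_before_cop :: "('a list \<Rightarrow> 'a) \<Rightarrow> (nat \<Rightarrow> 'a) \<Rightarrow> nat \<Rightarrow> bool" where
  "alive_before_cop \<sigma> r n \<longleftrightarrow> (\<forall>m<n. r m \<noteq> cpos \<sigma> r m \<and> (0 < m \<longrightarrow> cpos \<sigma> r m \<noteq> r (m - 1)))"

text \<open>The game is still running when the robber is about to take position r n.\<close>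

definition alive_before_rob :: "('a list \<Rightarrow> 'a) \<Rightarrow> (nat \<Rightarrow> 'a) \<Rightarrow> nat \<Rightarrow> bool" where
  "alive_before_rob \<sigma> r n \<longleftrightarrow> alive_before_cop \<sigma> r n \<and> (0 < n \<longrightarrow> cpos \<sigma> r n \<noteq> r (n - 1))"

text \<open>sigma guards the vertex set H: against every robber play, after finitely many moves
the cop is in H and stays there, and whenever the robber is on H he is captured by the
cop's next move.\<close>

definition guarding_strategy :: "'a set \<Rightarrow> ('a \<Rightarrow> 'a \<Rightarrow> bool) \<Rightarrow> 'a set \<Rightarrow> ('a list \<Rightarrow> 'a) \<Rightarrow> bool" where
  "guarding_strategy V adj H \<sigma> \<longleftrightarrow> legal_cop_strategy V adj \<sigma> \<and>
     (\<forall>r. robber_walk V adj r \<longrightarrow> (\<exists>N.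
        (\<forall>n\<ge>N. alive_before_cop \<sigma> r n \<longrightarrow> cpos \<sigma> r n \<in> H) \<and>
        (\<forall>n\<ge>N. alive_before_rob \<sigma> r n \<and> r n \<in> H \<longrightarrow> cpos \<sigma> r (Suc n) = r n)))"

text \<open>Leisurely: there is t such that among any t consecutive cop moves (that take place)
there is one in which the cop stays still.\<close>

definition leisurely_guardable1 :: "'a set \<Rightarrow> ('a \<Rightarrow> 'a \<Rightarrow> bool) \<Rightarrow> 'a set \<Rightarrow> bool" where
  "leisurely_guardable1 V adj H \<longleftrightarrow> (\<exists>\<sigma> t. guarding_strategy V adj H \<sigma> \<and>
     (\<forall>r. robber_walk V adj r \<longrightarrow> (\<forall>i. alive_before_cop \<sigma> r (i + t) \<longrightarrow>
        (\<exists>j. i \<le> j \<and> j < i + t \<and> cpos \<sigma> r (Suc j) = cpos \<sigma> r j))))"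

end

theory Submission
  imports Defs
begin


lemma is_walk_single[simp]: "is_walk V adj [x] \<longleftrightarrow> x \<in> V"
  by (auto simp: is_walk_def)

lemma is_walk_nth:
  assumes "is_walk V adj xs" "Suc i < length xs" shows "adj (xs ! i) (xs ! Suc i)"
  using assms by (auto simp: is_walk_def)

lemma is_walk_Cons2[simp]:
  "is_walk V adj (x # y # zs) \<longleftrightarrow> x \<in> V \<and> adj x y \<and> is_walk V adj (y # zs)"
proof
  assume h: "is_walk V adj (x # y # zs)"
  then have "adj x y" unfolding is_walk_def by force
  moreover have "is_walk V adj (y # zs)" unfolding is_walk_def
  proof (intro conjI allI impI)
    fix i assume "Suc i < length (y # zs)"
    then show "adj ((y # zs) ! i) ((y # zs) ! Suc i)"
      using is_walk_nth[OF h, of "Suc i"] by simp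
  qed (use h in \<open>auto simp: is_walk_def\<close>)
  ultimately show "x \<in> V \<and> adj x y \<and> is_walk V adj (y # zs)" using h by (auto simp: is_walk_def)
next
  assume h: "x \<in> V \<and> adj x y \<and> is_walk V adj (y # zs)"
  show "is_walk V adj (x # y # zs)" unfolding is_walk_def
  proof (intro conjI allI impI)
    fix i assume i: "Suc i < length (x # y # zs)"
    show "adj ((x # y # zs) ! i) ((x # y # zs) ! Suc i)"
    proof (cases i)
      case 0 then show ?thesis using h by simp
    next
      case (Suc j) then show ?thesis using h i unfolding is_walk_def by auto
    qed
  qed (use h in \<open>auto simp: is_walk_def\<close>)
qed

lemma is_walk_append:
  assumes "is_walk V adj xs" "is_walk V adj ys" "last xs = hd ys"
  shows "is_walk V adj (xs @ tl ys)"
  using assms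
proof (induction xs)
  case Nil then show ?case by (simp add: is_walk_def)
next
  case (Cons x xs')
  show ?case
  proof (cases xs')
    case Nil
    then have "ys = x # tl ys" using Cons.prems by (cases ys) (auto simp: is_walk_def)
    then show ?thesis using Cons.prems Nil by (metis append_Cons append_Nil)
  next
    case (Cons y zs)
    then have "is_walk V adj (y # zs @ tl ys)" using Cons.IH Cons.prems \<open>xs' = y # zs\<close> by auto
    then show ?thesis using Cons.prems \<open>xs' = y # zs\<close> by auto
  qed
qed

lemma is_walk_rev:
  assumes "is_walk V adj xs" "\<forall>x y. adj x y \<longrightarrow> adj y x"
  shows "is_walk V adj (rev xs)"
  unfolding is_walk_def
proof (intro conjI allI impI)
  show "rev xs \<noteq> []" "set (rev xs) \<subseteq> V" using assms by (auto simp: is_walk_def)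
  fix i assume i: "Suc i < length (rev xs)"
  have "adj (xs ! (length xs - Suc (Suc i))) (xs ! Suc (length xs - Suc (Suc i)))"
    using i by (intro is_walk_nth[OF assms(1)]) auto
  moreover have "Suc (length xs - Suc (Suc i)) = length xs - Suc i" using i by simp
  ultimately show "adj (rev xs ! i) (rev xs ! Suc i)" using assms(2) i
    by (auto simp: rev_nth)
qed

lemma is_walk_sub:
  assumes "is_walk V adj xs" "p \<le> q" "q < length xs"
  shows "is_walk V adj (take (Suc (q - p)) (drop p xs))"
    "hd (take (Suc (q - p)) (drop p xs)) = xs ! p"
    "last (take (Suc (q - p)) (drop p xs)) = xs ! q"
    "length (take (Suc (q - p)) (drop p xs)) = Suc (q - p)"
proof -
  let ?s = "take (Suc (q - p)) (drop p xs)"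
  have len: "length ?s = Suc (q - p)" using assms by simp
  have nth: "\<And>i. i < Suc (q - p) \<Longrightarrow> ?s ! i = xs ! (p + i)" using assms by simp
  show "is_walk V adj ?s" unfolding is_walk_def
  proof (intro conjI allI impI)
    show "?s \<noteq> []" using len by auto
    show "set ?s \<subseteq> V" using assms(1) unfolding is_walk_def
      by (meson order_trans set_drop_subset set_take_subset)
    fix i assume "Suc i < length ?s"
    then show "adj (?s ! i) (?s ! Suc i)" using nth len assms
      by (auto intro!: is_walk_nth[OF assms(1)])
  qed
  show "hd ?s = xs ! p" using nth[of 0] len by (simp add: hd_conv_nth)
  show "last ?s = xs ! q" using nth[of "q - p"] len assms by (simp add: last_conv_nth)
  show "length ?s = Suc (q - p)" by (rule len)
qed



lemma walk_len: "is_walk V adj xs \<Longrightarrow> length xs = Suc (length xs - 1)"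
  by (cases xs) (auto simp: is_walk_def)

lemma gdist_le_walk:
  assumes "is_walk V adj xs" "hd xs = x" "last xs = y"
  shows "gdist V adj x y \<le> length xs - 1"
  unfolding gdist_def using assms walk_len[OF assms(1)] by (intro Least_le) auto

lemma gdist_walk:
  assumes "connected_graph V adj" "x \<in> V" "y \<in> V"
  shows "\<exists>xs. is_walk V adj xs \<and> hd xs = x \<and> last xs = y \<and> length xs = Suc (gdist V adj x y)"
proof -
  obtain xs where xs: "is_walk V adj xs" "hd xs = x" "last xs = y"
    using assms unfolding connected_graph_def by blast
  have ex: "\<exists>n. \<exists>xs. is_walk V adj xs \<and> hd xs = x \<and> last xs = y \<and> length xs = Suc n"
    using xs walk_len[OF xs(1)] by blast
  show ?thesis unfolding gdist_def by (rule LeastI_ex[OF ex])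
qed

lemma graph_sym: "connected_graph V adj \<Longrightarrow> adj x y \<Longrightarrow> adj y x"
  by (auto simp: connected_graph_def graph_def)

lemma graph_V: "connected_graph V adj \<Longrightarrow> adj x y \<Longrightarrow> x \<in> V \<and> y \<in> V"
  by (auto simp: connected_graph_def graph_def)

lemma gdist_refl: "x \<in> V \<Longrightarrow> gdist V adj x x = 0"
  using gdist_le_walk[of V adj "[x]" x x] by simp

lemma gdist_adj: "connected_graph V adj \<Longrightarrow> adj x y \<Longrightarrow> gdist V adj x y \<le> 1"
  using gdist_le_walk[of V adj "[x,y]" x y] graph_V[of V adj x y] by simp

lemma gdist_0:
  assumes "connected_graph V adj" "x \<in> V" "y \<in> V" "gdist V adj x y = 0" shows "x = y"
proof -
  obtain xs where "is_walk V adj xs" "hd xs = x" "last xs = y" "length xs = Suc 0"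
    using gdist_walk[OF assms(1-3)] assms(4) by auto
  then show ?thesis by (cases xs) auto
qed

lemma gdist_1:
  assumes "connected_graph V adj" "x \<in> V" "y \<in> V" "gdist V adj x y = 1" shows "adj x y"
proof -
  obtain xs where xs: "is_walk V adj xs" "hd xs = x" "last xs = y" "length xs = Suc (Suc 0)"
    using gdist_walk[OF assms(1-3)] assms(4) by auto
  then obtain a b where "xs = [a, b]" by (cases xs; cases "tl xs") auto
  then show ?thesis using xs by auto
qed

lemma gdist_tri:
  assumes "connected_graph V adj" "x \<in> V" "y \<in> V" "z \<in> V"
  shows "gdist V adj x z \<le> gdist V adj x y + gdist V adj y z"
proof -
  obtain xs where xs: "is_walk V adj xs" "hd xs = x" "last xs = y" "length xs = Suc (gdist V adj x y)"
    using gdist_walk[OF assms(1-3)] by blast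
  obtain ys where ys: "is_walk V adj ys" "hd ys = y" "last ys = z" "length ys = Suc (gdist V adj y z)"
    using gdist_walk[OF assms(1,3,4)] by blast
  have w: "is_walk V adj (xs @ tl ys)" using is_walk_append xs ys by metis
  have "hd (xs @ tl ys) = x" using xs by (cases xs) auto
  moreover have "last (xs @ tl ys) = z"
  proof (cases "tl ys")
    case Nil then show ?thesis using ys xs by (cases ys) auto
  next
    case (Cons a l) then show ?thesis using ys by (metis last_appendR last_tl list.distinct(1))
  qed
  ultimately have "gdist V adj x z \<le> length (xs @ tl ys) - 1" using gdist_le_walk[OF w] by blast
  then show ?thesis using xs ys by simp
qed

lemma gdist_sym:
  assumes "connected_graph V adj" "x \<in> V" "y \<in> V"
  shows "gdist V adj x y = gdist V adj y x"
proof -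
  have *: "gdist V adj b a \<le> gdist V adj a b" if ab: "a \<in> V" "b \<in> V" for a b
  proof -
    obtain xs where xs: "is_walk V adj xs" "hd xs = a" "last xs = b" "length xs = Suc (gdist V adj a b)"
      using gdist_walk[OF assms(1) ab] by blast
    have "is_walk V adj (rev xs)" using is_walk_rev xs(1) graph_sym[OF assms(1)] by blast
    moreover have "hd (rev xs) = b" "last (rev xs) = a" using xs
      by (auto simp: hd_rev last_rev)
    ultimately show ?thesis using gdist_le_walk[of V adj "rev xs" b a] xs by simp
  qed
  show ?thesis using *[of x y] *[of y x] assms by simp
qed

lemma gdist_sub:
  assumes "is_walk V adj xs" "p \<le> q" "q < length xs"
  shows "gdist V adj (xs ! p) (xs ! q) \<le> q - p"
  using gdist_le_walk[OF is_walk_sub(1,2,3)[OF assms]] is_walk_sub(4)[OF assms] by simp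

lemma path_gdist:
  assumes "distinct xs" "xs \<noteq> []" "p < length xs" "q < length xs"
  shows "gdist (set xs) (path_adj xs) (xs ! p) (xs ! q) = (if p \<le> q then q - p else p - q)"
proof -
  let ?G = "set xs" and ?A = "path_adj xs"
  have sym: "\<forall>x y. ?A x y \<longrightarrow> ?A y x" unfolding path_adj_def by blast
  have xsw: "is_walk ?G ?A xs" unfolding is_walk_def path_adj_def using assms(2) by auto
  have up: "gdist ?G ?A (xs ! p) (xs ! q) \<le> q - p" if "p \<le> q" "q < length xs" for p q
    using gdist_sub[OF xsw that] .
  have upper: "gdist ?G ?A (xs ! p) (xs ! q) \<le> (if p \<le> q then q - p else p - q)"
  proof (cases "p \<le> q")
    case True then show ?thesis using up assms by simp
  next
    case False
    obtain ws where ws: "is_walk ?G ?A ws" "hd ws = xs ! q" "last ws = xs ! p" "length ws = Suc (p - q)"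
      using is_walk_sub[OF xsw, of q p] False assms by auto
    have "is_walk ?G ?A (rev ws)" using is_walk_rev[OF ws(1) sym] .
    moreover have "hd (rev ws) = xs ! p" "last (rev ws) = xs ! q" using ws
      by (auto simp: hd_rev last_rev)
    ultimately show ?thesis using gdist_le_walk[of ?G ?A "rev ws"] ws False by fastforce
  qed
  have lower: "(if p \<le> q then q - p else p - q) \<le> n"
    if ws: "is_walk ?G ?A ws" "hd ws = xs ! p" "last ws = xs ! q" "length ws = Suc n" for ws n
  proof -
    have inv: "\<forall>s. s < length ws \<longrightarrow> (\<exists>m < length xs. ws ! s = xs ! m \<and> (if p \<le> m then m - p else p - m) \<le> s)"
    proof (intro allI)
      fix s show "s < length ws \<longrightarrow> (\<exists>m < length xs. ws ! s = xs ! m \<and> (if p \<le> m then m - p else p - m) \<le> s)"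
      proof (induction s)
        case 0 have "ws ! 0 = xs ! p" using ws by (cases ws) auto
        then show ?case using assms by (auto intro!: exI[of _ p])
      next
        case (Suc s)
        show ?case
        proof
          assume s: "Suc s < length ws"
          then obtain m where m: "m < length xs" "ws ! s = xs ! m" "(if p \<le> m then m - p else p - m) \<le> s"
            using Suc by auto
          have "?A (ws ! s) (ws ! Suc s)" using is_walk_nth[OF ws(1) s] .
          then obtain i where i: "Suc i < length xs"
            "(ws ! s = xs ! i \<and> ws ! Suc s = xs ! Suc i) \<or> (ws ! Suc s = xs ! i \<and> ws ! s = xs ! Suc i)"
            unfolding path_adj_def by blast
          show "\<exists>m < length xs. ws ! Suc s = xs ! m \<and> (if p \<le> m then m - p else p - m) \<le> Suc s"
            using i(2)
          proof
            assume h: "ws ! s = xs ! i \<and> ws ! Suc s = xs ! Suc i"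
            then have "m = i" using m i assms(1) nth_eq_iff_index_eq by fastforce
            then show ?thesis using h i m by (intro exI[of _ "Suc i"]) (auto split: if_splits)
          next
            assume h: "ws ! Suc s = xs ! i \<and> ws ! s = xs ! Suc i"
            then have "m = Suc i" using m i assms(1) nth_eq_iff_index_eq by fastforce
            then show ?thesis using h i m by (intro exI[of _ i]) (auto split: if_splits)
          qed
        qed
      qed
    qed
    obtain m where m: "m < length xs" "ws ! n = xs ! m" "(if p \<le> m then m - p else p - m) \<le> n"
      using inv ws(4) by auto
    have "ws \<noteq> []" using ws(4) by auto
    then have "ws ! n = xs ! q" using ws(3,4) by (simp add: last_conv_nth)
    then have "m = q" using m assms nth_eq_iff_index_eq by fastforce
    then show ?thesis using m by auto
  qed
  have ex: "\<exists>n ws. is_walk ?G ?A ws \<and> hd ws = xs ! p \<and> last ws = xs ! q \<and> length ws = Suc n"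
  proof -
    have "?G = set xs" by simp
    have "xs ! p \<in> ?G" "xs ! q \<in> ?G" using assms by auto
    have c: "\<exists>ws. is_walk ?G ?A ws \<and> hd ws = xs ! p \<and> last ws = xs ! q"
    proof (cases "p \<le> q")
      case True then show ?thesis using is_walk_sub[OF xsw True assms(4)] by blast
    next
      case False
      obtain ws where ws: "is_walk ?G ?A ws" "hd ws = xs ! q" "last ws = xs ! p"
        using is_walk_sub[OF xsw, of q p] False assms by auto
      then show ?thesis using is_walk_rev[OF ws(1) sym] by (intro exI[of _ "rev ws"]) (auto simp: hd_rev last_rev)
    qed
    then show ?thesis using walk_len by metis
  qed
  have "\<exists>ws. is_walk ?G ?A ws \<and> hd ws = xs ! p \<and> last ws = xs ! q \<and>
     length ws = Suc (gdist ?G ?A (xs ! p) (xs ! q))"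
    unfolding gdist_def by (rule LeastI_ex[OF ex])
  then obtain ws where "is_walk ?G ?A ws" "hd ws = xs ! p" "last ws = xs ! q"
     "length ws = Suc (gdist ?G ?A (xs ! p) (xs ! q))" by blast
  then have "(if p \<le> q then q - p else p - q) \<le> gdist ?G ?A (xs ! p) (xs ! q)" using lower by blast
  then show ?thesis using upper by linarith
qed



definition ndist :: "nat \<Rightarrow> nat \<Rightarrow> nat" where
  "ndist p q = (if p \<le> q then q - p else p - q)"

lemma iso_dist:
  assumes "isometric_path V adj P" "p < length P" "q < length P"
  shows "gdist V adj (P ! p) (P ! q) = ndist p q"
proof -
  have "distinct P" "P \<noteq> []" using assms(1) by (auto simp: isometric_path_def is_path_def is_walk_def)
  then have "gdist (set P) (path_adj P) (P ! p) (P ! q) = ndist p q"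
    using path_gdist assms(2,3) unfolding ndist_def by blast
  then show ?thesis using assms unfolding isometric_path_def by (metis nth_mem)
qed

lemma iso_from_dist:
  assumes G: "connected_graph V adj" and ne: "xs \<noteq> []" and sub: "set xs \<subseteq> V"
    and d: "\<And>p q. p < length xs \<Longrightarrow> q < length xs \<Longrightarrow> gdist V adj (xs ! p) (xs ! q) = ndist p q"
  shows "isometric_path V adj xs"
proof -
  have w: "is_walk V adj xs" unfolding is_walk_def
  proof (intro conjI allI impI ne sub)
    fix i assume i: "Suc i < length xs"
    have "gdist V adj (xs ! i) (xs ! Suc i) = 1" using d[of i "Suc i"] i by (simp add: ndist_def)
    then show "adj (xs ! i) (xs ! Suc i)" using gdist_1[OF G] sub i
      by (meson Suc_lessD nth_mem subsetD)
  qed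
  have dis: "distinct xs" unfolding distinct_conv_nth
  proof (intro allI impI)
    fix i j assume ij: "i < length xs" "j < length xs" "i \<noteq> j"
    show "xs ! i \<noteq> xs ! j"
    proof
      assume e: "xs ! i = xs ! j"
      have "gdist V adj (xs ! i) (xs ! j) = 0" unfolding e using sub ij
        by (intro gdist_refl) auto
      then show False using d[of i j] ij by (auto simp: ndist_def split: if_splits)
    qed
  qed
  show ?thesis unfolding isometric_path_def is_path_def
  proof (intro conjI w dis ballI)
    fix x y assume "x \<in> set xs" "y \<in> set xs"
    then obtain p q where pq: "p < length xs" "q < length xs" "x = xs ! p" "y = xs ! q"
      by (metis in_set_conv_nth)
    show "gdist (set xs) (path_adj xs) x y = gdist V adj x y"
      using path_gdist[OF dis ne pq(1,2)] d[OF pq(1,2)] pq(3,4) by (simp add: ndist_def)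
  qed
qed

lemma geodesic:
  assumes G: "connected_graph V adj" and w: "is_walk V adj Q" and len: "length Q = Suc L"
    and dl: "gdist V adj (Q ! 0) (Q ! L) = L"
    and pq: "p \<le> q" "q \<le> L"
  shows "gdist V adj (Q ! p) (Q ! q) = q - p"
proof -
  have V: "\<And>i. i \<le> L \<Longrightarrow> Q ! i \<in> V" using w len unfolding is_walk_def
    by (metis le_imp_less_Suc nth_mem subsetD)
  have a: "gdist V adj (Q ! 0) (Q ! p) \<le> p" using gdist_sub[OF w, of 0 p] pq len by simp
  have b: "gdist V adj (Q ! q) (Q ! L) \<le> L - q" using gdist_sub[OF w, of q L] pq len by simp
  have c: "gdist V adj (Q ! p) (Q ! q) \<le> q - p" using gdist_sub[OF w, of p q] pq len by simp
  have "L \<le> gdist V adj (Q ! 0) (Q ! p) + gdist V adj (Q ! p) (Q ! L)"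
    using gdist_tri[OF G V V V, of 0 p L] pq dl by simp
  moreover have "gdist V adj (Q ! p) (Q ! L) \<le> gdist V adj (Q ! p) (Q ! q) + gdist V adj (Q ! q) (Q ! L)"
    using gdist_tri[OF G V V V, of p q L] pq by simp
  ultimately show ?thesis using a b c pq by linarith
qed



lemma bypath_exists:
  assumes G: "connected_graph V adj" and iso: "isometric_path V adj P"
    and xV: "x \<in> V" and xP: "x \<notin> set P"
    and l: "l2 < l1" "l1 < length P"
    and sum: "gdist V adj (P ! l2) x + gdist V adj x (P ! l1) = l1 - l2"
  shows "\<exists>B. bypath V adj P B"
proof -
  define k where "k = length P"
  define L where "L = l1 - l2"
  define d2 where "d2 = gdist V adj (P ! l2) x"
  define d1 where "d1 = gdist V adj x (P ! l1)"
  have PV: "\<And>m. m < k \<Longrightarrow> P ! m \<in> V" using iso unfolding isometric_path_def is_path_def is_walk_def k_def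
    by (meson nth_mem subsetD)
  have pd: "\<And>p q. p < k \<Longrightarrow> q < k \<Longrightarrow> gdist V adj (P ! p) (P ! q) = ndist p q"
    using iso_dist[OF iso] k_def by blast
  have d2pos: "d2 \<ge> 1"
  proof (rule ccontr)
    assume "\<not> 1 \<le> d2"
    then have "P ! l2 = x" using gdist_0[OF G PV xV] l unfolding d2_def k_def by auto
    then show False using xP l by auto
  qed
  have d1pos: "d1 \<ge> 1"
  proof (rule ccontr)
    assume "\<not> 1 \<le> d1"
    then have "x = P ! l1" using gdist_0[OF G xV PV] l unfolding d1_def k_def by auto
    then show False using xP l by auto
  qed
  have l2k: "l2 < k" and l1k: "l1 < k" using l k_def by auto
  obtain W1 where W1: "is_walk V adj W1" "hd W1 = P ! l2" "last W1 = x" "length W1 = Suc d2"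
    using gdist_walk[OF G PV[OF l2k] xV] unfolding d2_def by blast
  obtain W2 where W2: "is_walk V adj W2" "hd W2 = x" "last W2 = P ! l1" "length W2 = Suc d1"
    using gdist_walk[OF G xV PV[OF l1k]] unfolding d1_def by blast
  define Q where "Q = W1 @ tl W2"
  have Qw: "is_walk V adj Q" unfolding Q_def using is_walk_append W1 W2 by metis
  have Qlen: "length Q = Suc L" unfolding Q_def using W1 W2 sum d1_def d2_def L_def by simp
  have Q0: "Q ! 0 = P ! l2" unfolding Q_def using W1 by (cases W1) auto
  have Qd2: "Q ! d2 = x" unfolding Q_def using W1
    by (metis diff_Suc_1 last_conv_nth lessI list.size(3) nat.distinct(1) nth_append)
  have QL: "Q ! L = P ! l1"
  proof -
    have "tl W2 \<noteq> []" using W2 d1pos by (cases W2) auto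
    then have "last Q = last W2" unfolding Q_def by (metis last_appendR last_tl)
    then show ?thesis using Qlen W2 by (metis diff_Suc_1 last_conv_nth list.size(3) nat.distinct(1))
  qed
  have QV: "\<And>p. p \<le> L \<Longrightarrow> Q ! p \<in> V" using Qw Qlen unfolding is_walk_def
    by (metis le_imp_less_Suc nth_mem subsetD)
  have d0L: "gdist V adj (Q ! 0) (Q ! L) = L" using pd[of l2 l1] l Q0 QL unfolding k_def L_def ndist_def by simp
  have geo: "\<And>p q. p \<le> q \<Longrightarrow> q \<le> L \<Longrightarrow> gdist V adj (Q ! p) (Q ! q) = q - p"
    using geodesic[OF G Qw Qlen d0L] by blast
  have onP: "Q ! p = P ! (l2 + p)" if p: "p \<le> L" "Q ! p \<in> set P" for p
  proof -
    obtain m where m: "m < k" "Q ! p = P ! m" using p by (metis in_set_conv_nth k_def)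
    have "ndist l2 m = p" using geo[of 0 p] p pd[of l2 m] m Q0 l k_def by simp
    moreover have "ndist m l1 = L - p" using geo[of p L] p pd[of m l1] m QL l k_def by simp
    ultimately have "m = l2 + p" unfolding ndist_def L_def using p(1) L_def by (auto split: if_splits)
    then show ?thesis using m by simp
  qed
  define SI where "SI = {p. p < d2 \<and> Q ! p \<in> set P}"
  define SJ where "SJ = {p. d2 < p \<and> p \<le> L \<and> Q ! p \<in> set P}"
  have "0 \<in> SI" unfolding SI_def using d2pos Q0 l by auto
  have "L \<in> SJ" unfolding SJ_def using d1pos QL l sum d1_def d2_def L_def by auto
  have fSI: "finite SI" unfolding SI_def by auto
  have fSJ: "finite SJ" unfolding SJ_def by auto
  define i where "i = Max SI"
  define j where "j = Min SJ"
  have iSI: "i \<in> SI" unfolding i_def using fSI \<open>0 \<in> SI\<close> Max_in by blast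
  have jSJ: "j \<in> SJ" unfolding j_def using fSJ \<open>L \<in> SJ\<close> Min_in by blast
  have i: "i < d2" "Q ! i \<in> set P" using iSI SI_def by auto
  have j: "d2 < j" "j \<le> L" "Q ! j \<in> set P" using jSJ SJ_def by auto
  have between: "Q ! p \<notin> set P" if "i < p" "p < j" for p
  proof
    assume pP: "Q ! p \<in> set P"
    consider "p < d2" | "p = d2" | "d2 < p" by linarith
    then show False
    proof cases
      case 1 then have "p \<in> SI" using pP SI_def by auto
      then show False using that fSI i_def by (meson Max_ge not_le)
    next
      case 2 then show False using pP Qd2 xP by simp
    next
      case 3 then have "p \<in> SJ" using pP SJ_def that j by auto
      then show False using that fSJ j_def by (meson Min_le not_le)
    qed
  qed
  define I where "I = l2 + i"
  define J where "J = l2 + j"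
  have QI: "Q ! i = P ! I" using onP i j unfolding I_def by auto
  have QJ: "Q ! j = P ! J" using onP j unfolding J_def by auto
  have IJ: "I < J" "J < k" "J \<le> l1" using i j l unfolding I_def J_def L_def k_def by auto
  define B where "B = take (Suc (j - i)) (drop i Q)"
  have ij: "i \<le> j" "j < length Q" using i j Qlen by auto
  have Bw: "is_walk V adj B" and Bhd: "hd B = Q ! i" and Blast: "last B = Q ! j"
    and Blen: "length B = Suc (j - i)"
    using is_walk_sub[OF Qw ij] unfolding B_def by auto
  have Bnth: "\<And>q. q < length B \<Longrightarrow> B ! q = Q ! (i + q)" unfolding B_def using ij by simp
  have Bdist: "distinct B" unfolding distinct_conv_nth
  proof (intro allI impI)
    fix a b assume ab: "a < length B" "b < length B" "a \<noteq> b"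
    show "B ! a \<noteq> B ! b"
    proof
      assume e: "B ! a = B ! b"
      have "gdist V adj (Q ! (i + min a b)) (Q ! (i + max a b)) = max a b - min a b"
        using geo ab Blen j by auto
      moreover have "gdist V adj (Q ! (i + min a b)) (Q ! (i + max a b)) = 0"
      proof -
        have e1: "Q ! (i + a) = Q ! (i + b)" using e Bnth ab by simp
        have e2: "Q ! (i + min a b) = Q ! (i + max a b)" using e1 by (cases "a \<le> b") (auto simp: min_def max_def)
        have "i + max a b \<le> L" using ab Blen j by auto
        then show ?thesis unfolding e2 by (rule gdist_refl[OF QV])
      qed
      ultimately show False using ab by linarith
    qed
  qed
  have Bset: "set B \<inter> set P = {P ! I, P ! J}"
  proof
    show "{P ! I, P ! J} \<subseteq> set B \<inter> set P"
    proof -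
      have "P ! I \<in> set B" using Bhd QI Bw by (metis hd_in_set is_walk_def)
      moreover have "P ! J \<in> set B" using Blast QJ Bw by (metis last_in_set is_walk_def)
      moreover have "P ! I \<in> set P" "P ! J \<in> set P" using IJ k_def by auto
      ultimately show ?thesis by auto
    qed
    show "set B \<inter> set P \<subseteq> {P ! I, P ! J}"
    proof
      fix y assume y: "y \<in> set B \<inter> set P"
      then obtain q where q: "q < length B" "y = B ! q" by (metis IntD1 in_set_conv_nth)
      have "y = Q ! (i + q)" using q Bnth by simp
      then have "\<not> (i < i + q \<and> i + q < j)" using between y by blast
      then have "q = 0 \<or> q = j - i" using q Blen by auto
      then show "y \<in> {P ! I, P ! J}" using \<open>y = Q ! (i + q)\<close> QI QJ ij by auto
    qed
  qed
  define P' where "P' = take (Suc I) P @ butlast (tl B) @ drop J P"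
  have P'len: "length P' = k" unfolding P'_def using Blen IJ k_def i j I_def J_def by auto
  have P'nth: "P' ! p = (if p \<le> I then P ! p else if p < J then Q ! (p - l2) else P ! p)"
    if p: "p < k" for p
  proof -
    have l1': "length (take (Suc I) P) = Suc I" using IJ k_def by auto
    have l2': "length (butlast (tl B)) = j - i - 1" using Blen by simp
    show ?thesis
    proof (cases "p \<le> I")
      case True then show ?thesis unfolding P'_def using l1' by (simp add: nth_append)
    next
      case False
      note F = False
      show ?thesis
      proof (cases "p < J")
        case True
        have "butlast (tl B) ! (p - Suc I) = tl B ! (p - Suc I)"
          using l2' True F I_def J_def by (intro nth_butlast) auto
        also have "\<dots> = B ! Suc (p - Suc I)" using Blen True F I_def J_def by (simp add: nth_tl)
        also have "\<dots> = Q ! (i + Suc (p - Suc I))" using Bnth Blen True F I_def J_def by auto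
        also have "i + Suc (p - Suc I) = p - l2" using F I_def by auto
        finally have bq: "butlast (tl B) ! (p - Suc I) = Q ! (p - l2)" .
        have lt: "p - Suc I < length (butlast (tl B))" using l2' True F I_def J_def by auto
        have "P' ! p = (butlast (tl B) @ drop J P) ! (p - Suc I)" unfolding P'_def using l1' F
          by (simp add: nth_append)
        also have "\<dots> = Q ! (p - l2)" using lt bq by (simp add: nth_append)
        finally show ?thesis using True F by simp
      next
        case False
        have ge: "\<not> p - Suc I < length (butlast (tl B))" using l2' False F I_def J_def i j by auto
        have "P' ! p = (butlast (tl B) @ drop J P) ! (p - Suc I)" unfolding P'_def using l1' F
          by (simp add: nth_append)
        also have "\<dots> = drop J P ! (p - Suc I - (j - i - 1))" using ge l2' by (simp add: nth_append)
        also have "\<dots> = P ! p" using False F I_def J_def IJ p k_def by auto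
        finally show ?thesis using F False by simp
      qed
    qed
  qed
  have gQ: "P' ! p = Q ! (p - l2)" if "I \<le> p" "p \<le> J" "p < k" for p
    using P'nth[OF that(3)] that QI QJ I_def J_def by auto
  have PQI: "P ! I = Q ! (I - l2)" "P ! J = Q ! (J - l2)" using QI QJ I_def J_def by auto
  have P'V: "P' ! p \<in> V" if "p < k" for p
    using P'nth[OF that] PV[OF that] QV that IJ I_def J_def j by auto
  have dle: "gdist V adj (P' ! p) (P' ! q) = ndist p q" if pq: "p \<le> q" "q < k" for p q
  proof -
    have Qd: "\<And>a b. I \<le> a \<Longrightarrow> a \<le> b \<Longrightarrow> b \<le> J \<Longrightarrow> gdist V adj (Q ! (a - l2)) (Q ! (b - l2)) = b - a"
      using geo IJ I_def J_def j by auto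
    have QVa: "\<And>a. I \<le> a \<Longrightarrow> a \<le> J \<Longrightarrow> Q ! (a - l2) \<in> V" using QV J_def j by auto
    consider "q \<le> I" | "p \<le> I" "I < q" "q < J" | "p \<le> I" "J \<le> q" | "I < p" "q < J"
      | "I < p" "p < J" "J \<le> q" | "J \<le> p" using pq by linarith
    then show ?thesis
    proof cases
      case 1 then show ?thesis using P'nth pd pq by auto
    next
      case 2
      have e: "P' ! p = P ! p" "P' ! q = Q ! (q - l2)" using P'nth pq 2 by auto
      have up: "gdist V adj (P ! p) (Q ! (q - l2)) \<le> gdist V adj (P ! p) (P ! I) + gdist V adj (P ! I) (Q ! (q - l2))"
        using gdist_tri[OF G PV PV QVa] pq 2 IJ by auto
      have lo: "gdist V adj (P ! p) (P ! J) \<le> gdist V adj (P ! p) (Q ! (q - l2)) + gdist V adj (Q ! (q - l2)) (P ! J)"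
        using gdist_tri[OF G PV QVa PV] pq 2 IJ by auto
      have "gdist V adj (P ! p) (P ! I) = I - p" "gdist V adj (P ! p) (P ! J) = J - p"
        using pd pq 2 IJ by (auto simp: ndist_def)
      moreover have "gdist V adj (P ! I) (Q ! (q - l2)) = q - I" using Qd[of I q] PQI 2 by auto
      moreover have "gdist V adj (Q ! (q - l2)) (P ! J) = J - q" using Qd[of q J] PQI 2 by auto
      ultimately have "gdist V adj (P ! p) (Q ! (q - l2)) = q - p" using up lo 2 pq by linarith
      then show ?thesis using e 2 pq by (simp add: ndist_def)
    next
      case 3 then show ?thesis using P'nth pd pq IJ by auto
    next
      case 4 then show ?thesis using gQ Qd pq IJ by (auto simp: ndist_def)
    next
      case 5
      have e: "P' ! p = Q ! (p - l2)" "P' ! q = P ! q" using P'nth pq 5 by auto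
      have up: "gdist V adj (Q ! (p - l2)) (P ! q) \<le> gdist V adj (Q ! (p - l2)) (P ! J) + gdist V adj (P ! J) (P ! q)"
        using gdist_tri[OF G QVa PV PV] pq 5 IJ by auto
      have lo: "gdist V adj (P ! I) (P ! q) \<le> gdist V adj (P ! I) (Q ! (p - l2)) + gdist V adj (Q ! (p - l2)) (P ! q)"
        using gdist_tri[OF G PV QVa PV] pq 5 IJ by auto
      have "gdist V adj (P ! J) (P ! q) = q - J" "gdist V adj (P ! I) (P ! q) = q - I"
        using pd pq 5 IJ by (auto simp: ndist_def)
      moreover have "gdist V adj (P ! I) (Q ! (p - l2)) = p - I" using Qd[of I p] PQI 5 by auto
      moreover have "gdist V adj (Q ! (p - l2)) (P ! J) = J - p" using Qd[of p J] PQI 5 by auto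
      ultimately have "gdist V adj (Q ! (p - l2)) (P ! q) = q - p" using up lo 5 pq by linarith
      then show ?thesis using e 5 pq by (simp add: ndist_def)
    next
      case 6 then show ?thesis using P'nth pd pq IJ by auto
    qed
  qed
  have P'iso: "isometric_path V adj P'"
  proof (rule iso_from_dist[OF G])
    show "P' \<noteq> []" using P'len IJ by auto
    show "set P' \<subseteq> V" using P'V P'len by (metis in_set_conv_nth subsetI)
    fix p q assume "p < length P'" "q < length P'"
    then show "gdist V adj (P' ! p) (P' ! q) = ndist p q"
    proof (cases "p \<le> q")
      case True then show ?thesis using dle \<open>q < length P'\<close> P'len by auto
    next
      case False
      then have "gdist V adj (P' ! q) (P' ! p) = ndist q p" using dle \<open>p < length P'\<close> P'len by auto
      then show ?thesis using gdist_sym[OF G] P'V \<open>p < length P'\<close> \<open>q < length P'\<close> P'len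
        by (metis ndist_def False le_cases)
    qed
  qed
  have "bypath V adj P B" unfolding bypath_def
  proof (intro conjI exI)
    show "is_path V adj B" using Bw Bdist by (simp add: is_path_def)
    show "3 \<le> length B" using Blen i j by auto
    show "set B \<subseteq> V" using Bw by (simp add: is_walk_def)
    show "I < J" "J < length P" using IJ k_def by auto
    show "hd B = P ! I" "last B = P ! J" using Bhd Blast QI QJ by auto
    show "set B \<inter> set P = {P ! I, P ! J}" by (rule Bset)
    show "isometric_path V adj (take (Suc I) P @ butlast (tl B) @ drop J P)"
      using P'iso P'_def by simp
  qed
  then show ?thesis by blast
qed



locale GP =
  fixes V :: "'a set" and adj :: "'a \<Rightarrow> 'a \<Rightarrow> bool" and P :: "'a list"
  assumes G: "connected_graph V adj" and iso: "isometric_path V adj P"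
begin

abbreviation "k \<equiv> length P"
abbreviation "d \<equiv> gdist V adj"

definition lo :: "'a \<Rightarrow> int" where
  "lo x = Max (insert 0 ((\<lambda>l. int l - int (d x (P ! l))) ` {..<k}))"
definition hi :: "'a \<Rightarrow> int" where
  "hi x = Min (insert (int k - 1) ((\<lambda>l. int l + int (d x (P ! l))) ` {..<k}))"

lemma kpos: "k \<ge> 1"
  using iso by (cases P) (auto simp: isometric_path_def is_path_def is_walk_def)

lemma Pne: "P \<noteq> []"
  using iso by (auto simp: isometric_path_def is_path_def is_walk_def)

lemma PV: "m < k \<Longrightarrow> P ! m \<in> V"
  using iso unfolding isometric_path_def is_path_def is_walk_def by (meson nth_mem subsetD)

lemma pd: "p < k \<Longrightarrow> q < k \<Longrightarrow> d (P ! p) (P ! q) = ndist p q"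
  using iso_dist[OF iso] by blast

lemma lo_le_iff: "lo x \<le> c \<longleftrightarrow> 0 \<le> c \<and> (\<forall>l<k. int l - int (d x (P ! l)) \<le> c)"
  unfolding lo_def by (subst Max_le_iff) auto

lemma le_hi_iff: "c \<le> hi x \<longleftrightarrow> c \<le> int k - 1 \<and> (\<forall>l<k. c \<le> int l + int (d x (P ! l)))"
  unfolding hi_def by (subst Min_ge_iff) auto

lemma lo_ge: "0 \<le> lo x" "l < k \<Longrightarrow> int l - int (d x (P ! l)) \<le> lo x"
  unfolding lo_def by (auto intro: Max_ge)

lemma hi_le: "hi x \<le> int k - 1" "l < k \<Longrightarrow> hi x \<le> int l + int (d x (P ! l))"
   apply (unfold hi_def)
   apply (rule Min_le; simp)
  apply (rule Min_le; simp)
  done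

lemma lo_le: "lo x \<le> int k - 1"
  unfolding lo_le_iff using kpos by auto

lemma hi_ge: "0 \<le> hi x"
  using kpos by (auto simp: le_hi_iff)

lemma lo_cases: "lo x = 0 \<or> (\<exists>l<k. lo x = int l - int (d x (P ! l)))"
proof -
  have "lo x \<in> insert 0 ((\<lambda>l. int l - int (d x (P ! l))) ` {..<k})"
    unfolding lo_def by (rule Max_in) auto
  then show ?thesis by auto
qed

lemma hi_cases: "hi x = int k - 1 \<or> (\<exists>l<k. hi x = int l + int (d x (P ! l)))"
proof -
  have "hi x \<in> insert (int k - 1) ((\<lambda>l. int l + int (d x (P ! l))) ` {..<k})"
    unfolding hi_def by (rule Min_in) auto
  then show ?thesis by auto
qed

lemma lo_le_hi: assumes x: "x \<in> V" shows "lo x \<le> hi x"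
proof -
  have "int l - int (d x (P ! l)) \<le> int l' + int (d x (P ! l'))" if "l < k" "l' < k" for l l'
  proof -
    have "d (P ! l') (P ! l) \<le> d (P ! l') x + d x (P ! l)" using gdist_tri[OF G PV x PV] that by blast
    moreover have "d (P ! l') x = d x (P ! l')" using gdist_sym[OF G PV x] that by blast
    moreover have "d (P ! l') (P ! l) = ndist l' l" using pd that by blast
    ultimately show ?thesis unfolding ndist_def by (auto split: if_splits)
  qed
  then show ?thesis unfolding lo_le_iff le_hi_iff using hi_ge lo_le
    by (auto simp: lo_le_iff le_hi_iff)
qed

lemma d_lip:
  assumes "x \<in> V" "y \<in> V" "x = y \<or> adj x y" "z \<in> V"
  shows "d y z \<le> d x z + 1"
proof -
  have "d y x \<le> 1"
  proof (cases "x = y")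
    case True then show ?thesis using gdist_refl[of y V adj] assms by simp
  next
    case False then have "adj y x" using assms graph_sym[OF G] by blast
    then show ?thesis using gdist_adj[OF G] by blast
  qed
  moreover have "d y z \<le> d y x + d x z" using gdist_tri[OF G] assms by blast
  ultimately show ?thesis by linarith
qed

lemma lip:
  assumes "x \<in> V" "y \<in> V" "x = y \<or> adj x y"
  shows "lo y \<le> lo x + 1" "hi x \<le> hi y + 1"
proof -
  show "lo y \<le> lo x + 1" unfolding lo_le_iff
  proof (intro conjI allI impI)
    show "0 \<le> lo x + 1" using lo_ge(1) by simp
    fix l assume l: "l < k"
    have "d x (P ! l) \<le> d y (P ! l) + 1" using d_lip[of y x "P ! l"] assms PV l graph_sym[OF G] by blast
    then show "int l - int (d y (P ! l)) \<le> lo x + 1" using lo_ge(2)[OF l, of x] by linarith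
  qed
  show "hi x \<le> hi y + 1"
  proof -
    have "hi x - 1 \<le> hi y" unfolding le_hi_iff
    proof (intro conjI allI impI)
      show "hi x - 1 \<le> int k - 1" using hi_le(1)[of x] by simp
      fix l assume l: "l < k"
      have "d x (P ! l) \<le> d y (P ! l) + 1" using d_lip[of y x "P ! l"] assms PV l graph_sym[OF G] by blast
      then show "hi x - 1 \<le> int l + int (d y (P ! l))" using hi_le(2)[OF l, of x] by linarith
    qed
    then show ?thesis by simp
  qed
qed

lemma lohi_P: assumes m: "m < k" shows "lo (P ! m) = int m" "hi (P ! m) = int m"
proof -
  have dd: "\<And>l. l < k \<Longrightarrow> d (P ! m) (P ! l) = ndist m l" using pd m by blast
  have "lo (P ! m) \<le> int m" unfolding lo_le_iff using dd by (auto simp: ndist_def)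
  moreover have "int m \<le> lo (P ! m)" using lo_ge(2)[OF m, of "P ! m"] dd[OF m] by (simp add: ndist_def)
  ultimately show "lo (P ! m) = int m" by simp
  have "int m \<le> hi (P ! m)" unfolding le_hi_iff using dd m by (auto simp: ndist_def)
  moreover have "hi (P ! m) \<le> int m" using hi_le(2)[OF m, of "P ! m"] dd[OF m] by (simp add: ndist_def)
  ultimately show "hi (P ! m) = int m" by simp
qed

lemma single:
  assumes x: "x \<in> V" and bf: "bypath_free V adj P" and k2: "k \<ge> 2" and eq: "lo x = hi x"
  shows "x = P ! nat (lo x)"
proof -
  have zero: "x = P ! l" if "l < k" "d x (P ! l) = 0" for l
    using gdist_0[OF G x PV] that by blast
  consider "lo x = 0" "hi x = int k - 1"
    | l2 where "lo x = 0" "l2 < k" "hi x = int l2 + int (d x (P ! l2))"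
    | l1 where "l1 < k" "lo x = int l1 - int (d x (P ! l1))" "hi x = int k - 1"
    | l1 l2 where "l1 < k" "lo x = int l1 - int (d x (P ! l1))" "l2 < k" "hi x = int l2 + int (d x (P ! l2))"
    using lo_cases[of x] hi_cases[of x] by blast
  then show ?thesis
  proof cases
    case 1 then show ?thesis using eq k2 by simp
  next
    case (2 l2)
    then have "l2 = 0" "d x (P ! l2) = 0" using eq by auto
    then show ?thesis using zero 2 by simp
  next
    case (3 l1)
    then have "l1 = k - 1" "d x (P ! l1) = 0" using eq by auto
    then have "lo x = int l1" using 3 by simp
    then show ?thesis using zero 3 \<open>d x (P ! l1) = 0\<close> by simp
  next
    case (4 l1 l2)
    show ?thesis
    proof (cases "d x (P ! l1) = 0 \<or> d x (P ! l2) = 0")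
      case True
      then show ?thesis
      proof
        assume h: "d x (P ! l1) = 0"
        then have "lo x = int l1" using 4 by simp
        then show ?thesis using zero[OF \<open>l1 < k\<close> h] by simp
      next
        assume h: "d x (P ! l2) = 0"
        then have "lo x = int l2" using 4 eq by simp
        then show ?thesis using zero[OF \<open>l2 < k\<close> h] by simp
      qed
    next
      case False
      show ?thesis
      proof (cases "x \<in> set P")
        case True
        then obtain p where p: "p < k" "x = P ! p" by (metis in_set_conv_nth)
        then show ?thesis using lohi_P by simp
      next
        case False2: False
        have lt: "l2 < l1" "int l1 - int l2 = int (d x (P ! l1)) + int (d x (P ! l2))"
          using 4 eq False by auto
        have "d (P ! l2) x + d x (P ! l1) = l1 - l2"
          using lt gdist_sym[OF G x PV] 4 by auto
        then have "\<exists>B. bypath V adj P B"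
          using bypath_exists[OF G iso x False2 lt(1) \<open>l1 < k\<close>] by blast
        then show ?thesis using bf unfolding bypath_free_def by blast
      qed
    qed
  qed
qed


definition stp :: "int \<Rightarrow> 'a \<Rightarrow> int" where
  "stp c x = (if c < lo x then c + 1 else if hi x < c then c - 1 else c)"
definition cidx :: "'a list \<Rightarrow> int" where "cidx h = foldl stp 0 h"
definition strat :: "'a list \<Rightarrow> 'a" where "strat h = P ! nat (cidx h)"

lemma cidx_Suc: "cidx (map r [0..<Suc n]) = stp (cidx (map r [0..<n])) (r n)"
  by (simp add: cidx_def)

lemma cidx_0: "cidx (map r [0..<0]) = 0" by (simp add: cidx_def)

lemma cpos_eq: "cpos strat r n = P ! nat (cidx (map r [0..<n]))"
  by (simp add: cpos_def strat_def)

lemma stp_range: "0 \<le> c \<Longrightarrow> c \<le> int k - 1 \<Longrightarrow> 0 \<le> stp c x \<and> stp c x \<le> int k - 1"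
  using lo_le[of x] hi_ge[of x] unfolding stp_def by auto

lemma cidx_range: "0 \<le> cidx (map r [0..<n]) \<and> cidx (map r [0..<n]) \<le> int k - 1"
proof (induction n)
  case 0 then show ?case using Pne by (simp add: cidx_def)
next
  case (Suc n) then show ?case unfolding cidx_Suc using stp_range by blast
qed

lemma stp_cases: "stp c x = c \<or> stp c x = c + 1 \<or> stp c x = c - 1"
  by (simp add: stp_def)

lemma P_adj: "Suc a < k \<Longrightarrow> adj (P ! a) (P ! Suc a)"
  using iso unfolding isometric_path_def is_path_def by (blast intro: is_walk_nth)

lemma legal: "legal_cop_strategy V adj strat"
  unfolding legal_cop_strategy_def
proof (intro allI impI conjI)
  fix r
  show "strat [] \<in> V" unfolding strat_def cidx_def using PV[of 0] Pne by simp
  fix n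
  define c where "c = cidx (map r [0..<n])"
  have cr: "0 \<le> c" "c \<le> int k - 1" using cidx_range c_def by auto
  have cr': "0 \<le> stp c (r n)" "stp c (r n) \<le> int k - 1" using stp_range cr by auto
  have e: "cpos strat r (Suc n) = P ! nat (stp c (r n))" "cpos strat r n = P ! nat c"
    using cpos_eq cidx_Suc c_def by auto
  consider "stp c (r n) = c" | "stp c (r n) = c + 1" | "stp c (r n) = c - 1" using stp_cases[of c "r n"] by blast
  then show "cpos strat r (Suc n) = cpos strat r n \<or> adj (cpos strat r n) (cpos strat r (Suc n))"
  proof cases
    case 1 then show ?thesis using e by simp
  next
    case 2
    have "nat (c + 1) = Suc (nat c)" using cr by simp
    then show ?thesis using e 2 P_adj[of "nat c"] cr' by auto
  next
    case 3
    have "nat c = Suc (nat (c - 1))" using cr' 3 by simp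
    then have "adj (P ! nat (c - 1)) (P ! nat c)" using P_adj[of "nat (c - 1)"] cr by auto
    then show ?thesis using e 3 graph_sym[OF G] by auto
  qed
qed

lemma rw: assumes "robber_walk V adj r"
  shows "r n \<in> V" "r n = r (Suc n) \<or> adj (r n) (r (Suc n))" "r (Suc n) = r n \<or> adj (r (Suc n)) (r n)"
  using assms graph_sym[OF G] unfolding robber_walk_def by metis+

lemma lipr: assumes "robber_walk V adj r"
  shows "lo (r (Suc n)) \<le> lo (r n) + 1" "hi (r n) \<le> hi (r (Suc n)) + 1"
    "lo (r n) \<le> lo (r (Suc n)) + 1" "hi (r (Suc n)) \<le> hi (r n) + 1"
  using lip[OF rw(1)[OF assms, of n] rw(1)[OF assms, of "Suc n"] rw(2)[OF assms, of n]]
    lip[OF rw(1)[OF assms, of "Suc n"] rw(1)[OF assms, of n] rw(3)[OF assms, of n]] by auto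


abbreviation cc :: "(nat \<Rightarrow> 'a) \<Rightarrow> nat \<Rightarrow> int" where "cc r n \<equiv> cidx (map r [0..<n])"

lemma stay:
  assumes r: "robber_walk V adj r"
    and w: "lo (r n) \<le> cc r (Suc n)" "cc r (Suc n) \<le> hi (r n)"
  shows "lo (r (Suc n)) \<le> cc r (Suc (Suc n)) \<and> cc r (Suc (Suc n)) \<le> hi (r (Suc n))"
proof -
  have e: "cc r (Suc (Suc n)) = stp (cc r (Suc n)) (r (Suc n))" by (rule cidx_Suc)
  have "lo (r (Suc n)) \<le> hi (r (Suc n))" using lo_le_hi rw(1)[OF r] by blast
  then show ?thesis unfolding e stp_def using lipr[OF r, of n] w by auto
qed

lemma stay_all:
  assumes r: "robber_walk V adj r"
    and w: "lo (r n) \<le> cc r (Suc n)" "cc r (Suc n) \<le> hi (r n)"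
  shows "n \<le> m \<Longrightarrow> lo (r m) \<le> cc r (Suc m) \<and> cc r (Suc m) \<le> hi (r m)"
proof (induction m rule: dec_induct)
  case base then show ?case using w by simp
next
  case (step m) then show ?case using stay[OF r] by blast
qed

lemma enter:
  assumes r: "robber_walk V adj r"
  shows "\<exists>n. lo (r n) \<le> cc r (Suc n) \<and> cc r (Suc n) \<le> hi (r n)"
proof (rule ccontr)
  assume no: "\<not> ?thesis"
  have out: "cc r n < lo (r n) \<or> hi (r n) < cc r n" for n
  proof (rule ccontr)
    assume "\<not> ?thesis"
    then have a: "lo (r n) \<le> cc r n" "cc r n \<le> hi (r n)" by auto
    have "cc r (Suc n) = cc r n" unfolding cidx_Suc stp_def using a by auto
    moreover have "\<not> (lo (r n) \<le> cc r (Suc n) \<and> cc r (Suc n) \<le> hi (r n))" using no by blast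
    ultimately show False using a by auto
  qed
  have up: "cc r n < lo (r n) \<and> cc r n = int n" for n
  proof (induction n)
    case 0
    have "cc r 0 = 0" by (simp add: cidx_def)
    then show ?case using out[of 0] hi_ge[of "r 0"] by auto
  next
    case (Suc n)
    have e: "cc r (Suc n) = cc r n + 1" using Suc unfolding cidx_Suc stp_def by auto
    have lh: "lo (r n) \<le> hi (r n)" using lo_le_hi rw(1)[OF r] by blast
    have nn: "\<not> (lo (r n) \<le> cc r (Suc n) \<and> cc r (Suc n) \<le> hi (r n))" using no by blast
    have "cc r (Suc n) < lo (r n)" using nn e Suc lh by linarith
    then have "cc r (Suc n) < lo (r (Suc n))" using out[of "Suc n"] lipr[OF r, of n] lh by auto
    then show ?case using e Suc by simp
  qed
  then show False using up[of k] cidx_range[of r k] by auto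
qed

lemma capture:
  assumes r: "robber_walk V adj r"
    and w: "lo (r (n - 1)) \<le> cc r n" "cc r n \<le> hi (r (n - 1))" and n: "0 < n"
    and m: "m < k" "r n = P ! m"
  shows "cpos strat r (Suc n) = r n"
proof -
  obtain n' where n': "n = Suc n'" using n by (cases n) auto
  have "d (r n') (P ! m) \<le> d (r n) (P ! m) + 1"
    using d_lip[OF rw(1)[OF r] rw(1)[OF r] _ PV[OF m(1)]] rw(3)[OF r, of n'] n' by blast
  moreover have "d (r n) (P ! m) = 0" using m gdist_refl PV by metis
  ultimately have d1: "d (r n') (P ! m) \<le> 1" by simp
  have nn: "n - 1 = n'" using n' by simp
  have w': "lo (r n') \<le> cc r n" "cc r n \<le> hi (r n')" using w unfolding nn by auto
  have "int m - int (d (r n') (P ! m)) \<le> cc r n" using w'(1) lo_ge(2)[OF m(1), of "r n'"] by linarith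
  moreover have "cc r n \<le> int m + int (d (r n') (P ! m))" using w'(2) hi_le(2)[OF m(1), of "r n'"] by linarith
  ultimately have "int m - 1 \<le> cc r n" "cc r n \<le> int m + 1" using d1 by auto
  moreover have "lo (r n) = int m" "hi (r n) = int m" using lohi_P m by auto
  ultimately have "cc r (Suc n) = int m" unfolding cidx_Suc stp_def by auto
  then show ?thesis using cpos_eq m by simp
qed


declare upt_Suc[simp del]

lemma leis:
  assumes r: "robber_walk V adj r" and bf: "bypath_free V adj P"
    and al: "alive_before_cop strat r (i + Suc k)"
  shows "\<exists>j. i \<le> j \<and> j < i + Suc k \<and> cpos strat r (Suc j) = cpos strat r j"
proof (rule ccontr)
  assume no: "\<not> ?thesis"
  have out: "cc r j < lo (r j) \<or> hi (r j) < cc r j" if j: "i \<le> j" "j < i + Suc k" for j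
  proof (rule ccontr)
    assume "\<not> ?thesis"
    then have a: "lo (r j) \<le> cc r j" "cc r j \<le> hi (r j)" by auto
    have "cc r (Suc j) = cc r j" unfolding cidx_Suc stp_def using a by auto
    then have "cpos strat r (Suc j) = cpos strat r j" using cpos_eq by simp
    then show False using no j by blast
  qed
  have alv: "cpos strat r (Suc (Suc j)) \<noteq> r (Suc j)" if "Suc (Suc j) < i + Suc k" for j
    using al that unfolding alive_before_cop_def by fastforce
  have rng: "\<And>j. 0 \<le> cc r j \<and> cc r j \<le> int k - 1" using cidx_range by blast
  have upstep: "cc r (Suc j) < lo (r (Suc j))"
    if j: "i \<le> j" "Suc (Suc j) < i + Suc k" "cc r j < lo (r j)" for j
  proof (rule ccontr)
    assume h: "\<not> ?thesis"
    have e1: "cc r (Suc j) = cc r j + 1" unfolding cidx_Suc stp_def using j by simp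
    have "hi (r (Suc j)) < cc r (Suc j)" using out[of "Suc j"] h j by auto
    moreover have "lo (r (Suc j)) \<le> hi (r (Suc j))" using lo_le_hi rw(1)[OF r] by blast
    moreover have "lo (r j) \<le> lo (r (Suc j)) + 1" using lipr[OF r] by blast
    ultimately have eq: "lo (r (Suc j)) = hi (r (Suc j))" "lo (r (Suc j)) = cc r (Suc j) - 1"
      using e1 j by auto
    have e2: "cc r (Suc (Suc j)) = cc r (Suc j) - 1" unfolding cidx_Suc[of r "Suc j"] stp_def
      using eq by simp
    have k2: "k \<ge> 2" using rng[of j] lo_le[of "r j"] j by auto
    have "r (Suc j) = P ! nat (lo (r (Suc j)))" using single[OF rw(1)[OF r] bf k2 eq(1)] .
    also have "\<dots> = cpos strat r (Suc (Suc j))" using cpos_eq eq(2) e2 by simp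
    finally show False using alv[OF j(2)] by simp
  qed
  have downstep: "hi (r (Suc j)) < cc r (Suc j)"
    if j: "i \<le> j" "Suc (Suc j) < i + Suc k" "hi (r j) < cc r j" for j
  proof (rule ccontr)
    assume h: "\<not> ?thesis"
    have lh: "lo (r j) \<le> hi (r j)" using lo_le_hi rw(1)[OF r] by blast
    have e1: "cc r (Suc j) = cc r j - 1" unfolding cidx_Suc stp_def using j lh by simp
    have "cc r (Suc j) < lo (r (Suc j))" using out[of "Suc j"] h j by auto
    moreover have "lo (r (Suc j)) \<le> hi (r (Suc j))" using lo_le_hi rw(1)[OF r] by blast
    moreover have "hi (r (Suc j)) \<le> hi (r j) + 1" using lipr[OF r] by blast
    ultimately have eq: "lo (r (Suc j)) = hi (r (Suc j))" "lo (r (Suc j)) = cc r (Suc j) + 1"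
      using e1 j by auto
    have e2: "cc r (Suc (Suc j)) = cc r (Suc j) + 1" unfolding cidx_Suc[of r "Suc j"] stp_def
      using eq by simp
    have k2: "k \<ge> 2" using rng[of j] hi_ge[of "r j"] j by auto
    have "r (Suc j) = P ! nat (lo (r (Suc j)))" using single[OF rw(1)[OF r] bf k2 eq(1)] .
    also have "\<dots> = cpos strat r (Suc (Suc j))" using cpos_eq eq(2) e2 by simp
    finally show False using alv[OF j(2)] by simp
  qed
  have ki: "i + (k - 1) + 1 = i + k" using kpos by simp
  consider "cc r i < lo (r i)" | "hi (r i) < cc r i" using out[of i] by auto
  then show False
  proof cases
    case 1
    have inv: "m \<le> k - 1 \<longrightarrow> cc r (i + m) < lo (r (i + m)) \<and> cc r (i + m) = cc r i + int m" for m
    proof (induction m)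
      case 0 then show ?case using 1 by simp
    next
      case (Suc m)
      show ?case
      proof
        assume m: "Suc m \<le> k - 1"
        then have h: "cc r (i + m) < lo (r (i + m))" "cc r (i + m) = cc r i + int m" using Suc by auto
        have "cc r (Suc (i + m)) < lo (r (Suc (i + m)))" using upstep[of "i + m"] h m by auto
        moreover have "cc r (Suc (i + m)) = cc r (i + m) + 1" unfolding cidx_Suc stp_def using h by simp
        ultimately show "cc r (i + Suc m) < lo (r (i + Suc m)) \<and> cc r (i + Suc m) = cc r i + int (Suc m)"
          using h by simp
      qed
    qed
    have h: "cc r (i + (k - 1)) < lo (r (i + (k - 1)))" "cc r (i + (k - 1)) = cc r i + int (k - 1)"
      using inv[of "k - 1"] by blast+
    have "cc r (Suc (i + (k - 1))) = cc r (i + (k - 1)) + 1" unfolding cidx_Suc stp_def using h by simp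
    then have "cc r (i + k) = cc r i + int k" using h ki kpos by simp
    then show False using rng[of i] rng[of "i + k"] by simp
  next
    case 2
    have inv: "m \<le> k - 1 \<longrightarrow> hi (r (i + m)) < cc r (i + m) \<and> cc r (i + m) = cc r i - int m" for m
    proof (induction m)
      case 0 then show ?case using 2 by simp
    next
      case (Suc m)
      show ?case
      proof
        assume m: "Suc m \<le> k - 1"
        then have h: "hi (r (i + m)) < cc r (i + m)" "cc r (i + m) = cc r i - int m" using Suc by auto
        have lh: "lo (r (i + m)) \<le> hi (r (i + m))" using lo_le_hi rw(1)[OF r] by blast
        have "hi (r (Suc (i + m))) < cc r (Suc (i + m))" using downstep[of "i + m"] h m by auto
        moreover have "cc r (Suc (i + m)) = cc r (i + m) - 1" unfolding cidx_Suc stp_def using h lh by simp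
        ultimately show "hi (r (i + Suc m)) < cc r (i + Suc m) \<and> cc r (i + Suc m) = cc r i - int (Suc m)"
          using h by simp
      qed
    qed
    have h: "hi (r (i + (k - 1))) < cc r (i + (k - 1))" "cc r (i + (k - 1)) = cc r i - int (k - 1)"
      using inv[of "k - 1"] by blast+
    have lh: "lo (r (i + (k - 1))) \<le> hi (r (i + (k - 1)))" using lo_le_hi rw(1)[OF r] by blast
    have "cc r (Suc (i + (k - 1))) = cc r (i + (k - 1)) - 1" unfolding cidx_Suc stp_def using h lh by simp
    then have "cc r (i + k) = cc r i - int k" using h ki kpos by simp
    then show False using rng[of i] rng[of "i + k"] by simp
  qed
qed


lemma main:
  assumes bf: "bypath_free V adj P"
  shows "leisurely_guardable1 V adj (set P)"
proof -
  have g: "guarding_strategy V adj (set P) strat"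
    unfolding guarding_strategy_def
  proof (intro conjI legal allI impI)
    fix r assume r: "robber_walk V adj r"
    obtain n0 where n0: "lo (r n0) \<le> cc r (Suc n0)" "cc r (Suc n0) \<le> hi (r n0)"
      using enter[OF r] by blast
    show "\<exists>N. (\<forall>n\<ge>N. alive_before_cop strat r n \<longrightarrow> cpos strat r n \<in> set P) \<and>
      (\<forall>n\<ge>N. alive_before_rob strat r n \<and> r n \<in> set P \<longrightarrow> cpos strat r (Suc n) = r n)"
    proof (intro exI conjI allI impI)
      fix n assume "Suc n0 \<le> n"
      show "cpos strat r n \<in> set P" unfolding cpos_eq using cidx_range[of r n]
        by (intro nth_mem) linarith
    next
      fix n assume n: "Suc n0 \<le> n" and h: "alive_before_rob strat r n \<and> r n \<in> set P"
      obtain m where m: "m < k" "r n = P ! m" using h by (metis in_set_conv_nth)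
      have sn: "Suc (n - 1) = n" using n by simp
      have "lo (r (n - 1)) \<le> cc r (Suc (n - 1)) \<and> cc r (Suc (n - 1)) \<le> hi (r (n - 1))"
        using stay_all[OF r n0, of "n - 1"] n by linarith
      then have w: "lo (r (n - 1)) \<le> cc r n" "cc r n \<le> hi (r (n - 1))" unfolding sn by auto
      show "cpos strat r (Suc n) = r n" using capture[OF r w _ m] n by simp
    qed
  qed
  have l: "\<forall>r. robber_walk V adj r \<longrightarrow> (\<forall>i. alive_before_cop strat r (i + Suc k) \<longrightarrow>
        (\<exists>j. i \<le> j \<and> j < i + Suc k \<and> cpos strat r (Suc j) = cpos strat r j))"
    using leis[OF _ bf] by blast
  show ?thesis unfolding leisurely_guardable1_def using g l by blast
qed

end

theorem lemma4p1:
  fixes V :: "'a set" and adj :: "'a \<Rightarrow> 'a \<Rightarrow> bool" and P :: "'a list"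
  assumes "connected_graph V adj"
    and "isometric_path V adj P"
    and "bypath_free V adj P"
  shows "leisurely_guardable1 V adj (set P)"
proof -
  interpret GP V adj P using assms(1,2) by unfold_locales
  show ?thesis using main[OF assms(3)] .
qed

end
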